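(* Let $(B(t))_{t\ge 0}$ be a standard Brownian motion, let $S(t)=\max_{0\le s\le t}B(s)$, and let $\mathcal{A}=\int_0^1 S(t)\,dt$. Then \[ \mathbb{P}(\mathcal{A}>x)=\exp\{-3x^2/2+o(x^2)\},\qquad x\to\infty . \] *)

theory Defs
  imports "HOL-Probability.Probability" "HOL-Library.Landau_Symbols"
begin

definition std_brownian_motion :: "'a measure \<Rightarrow> (real \<Rightarrow> 'a \<Rightarrow> real) \<Rightarrow> bool" where
  "std_brownian_motion M B \<longleftrightarrow>
     prob_space M \<and>
     (\<forall>t\<ge>0. B t \<in> borel_measurable M) \<and>
     (\<forall>\<omega>\<in>space M. B 0 \<omega> = 0) \<and>
     (\<forall>\<omega>\<in>space M. continuous_on {0..} (\<lambda>t. B t \<omega>)) \<and>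
     (\<forall>s t. 0 \<le> s \<and> s < t \<longrightarrow>
        distributed M lborel (\<lambda>\<omega>. B t \<omega> - B s \<omega>)
          (\<lambda>x. ennreal (normal_density 0 (sqrt (t - s)) x))) \<and>
     (\<forall>(n::nat) (\<tau>::nat \<Rightarrow> real). 0 \<le> \<tau> 0 \<and> (\<forall>i<n. \<tau> i < \<tau> (Suc i)) \<longrightarrow>
        prob_space.indep_vars M (\<lambda>_. borel) (\<lambda>i \<omega>. B (\<tau> (Suc i)) \<omega> - B (\<tau> i) \<omega>) {..<n})"

definition running_max :: "(real \<Rightarrow> 'a \<Rightarrow> real) \<Rightarrow> real \<Rightarrow> 'a \<Rightarrow> real" where
  "running_max B t \<omega> = Sup ((\<lambda>s. B s \<omega>) ` {0..t})"

definition max_area :: "(real \<Rightarrow> 'a \<Rightarrow> real) \<Rightarrow> 'a \<Rightarrow> real" where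
  "max_area B \<omega> = integral {0..1} (\<lambda>t. running_max B t \<omega>)"

end

theory Submission
  imports Defs "HOL-Analysis.Equivalence_Measurable_On_Borel"
begin

lemma normal_tail_upper:
  assumes P: "prob_space M"
  assumes X: "distributed M lborel X (\<lambda>x. ennreal (normal_density 0 \<sigma> x))"
  assumes s: "0 < \<sigma>" and y: "0 \<le> y"
  shows "measure M {\<omega>\<in>space M. y < X \<omega>} \<le> exp (- y\<^sup>2 / (2 * \<sigma>\<^sup>2))"
proof -
  interpret prob_space M by fact
  have set: "{\<omega>\<in>space M. y < X \<omega>} = X -` {y<..} \<inter> space M" by auto
  have "emeasure M {\<omega>\<in>space M. y < X \<omega>} = (\<integral>\<^sup>+x. ennreal (normal_density 0 \<sigma> x) * indicator {y<..} x \<partial>lborel)"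
    unfolding set by (rule distributed_emeasure[OF X]) simp
  also have "\<dots> \<le> (\<integral>\<^sup>+x. ennreal (exp (- y\<^sup>2 / (2 * \<sigma>\<^sup>2)) * normal_density y \<sigma> x) \<partial>lborel)"
  proof (rule nn_integral_mono)
    fix x
    show "ennreal (normal_density 0 \<sigma> x) * indicator {y<..} x \<le> ennreal (exp (- y\<^sup>2 / (2 * \<sigma>\<^sup>2)) * normal_density y \<sigma> x)"
    proof (cases "y < x")
      case True
      have "x\<^sup>2 \<ge> y\<^sup>2 + (x - y)\<^sup>2" using True y by (simp add: power2_eq_square algebra_simps mult_right_mono)
      then have "- x\<^sup>2 / (2 * \<sigma>\<^sup>2) \<le> - y\<^sup>2 / (2 * \<sigma>\<^sup>2) + - (x - y)\<^sup>2 / (2 * \<sigma>\<^sup>2)"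
        using s by (simp add: field_simps)
      then have "exp (- x\<^sup>2 / (2 * \<sigma>\<^sup>2)) \<le> exp (- y\<^sup>2 / (2 * \<sigma>\<^sup>2)) * exp (- (x - y)\<^sup>2 / (2 * \<sigma>\<^sup>2))"
        by (simp add: exp_add[symmetric])
      then have "normal_density 0 \<sigma> x \<le> exp (- y\<^sup>2 / (2 * \<sigma>\<^sup>2)) * normal_density y \<sigma> x"
        unfolding normal_density_def using s
        by (simp add: mult_left_mono mult.left_commute divide_right_mono)
      then show ?thesis using True by (simp add: ennreal_leI)
    qed simp
  qed
  also have "\<dots> = ennreal (exp (- y\<^sup>2 / (2 * \<sigma>\<^sup>2))) * (\<integral>\<^sup>+x. ennreal (normal_density y \<sigma> x) \<partial>lborel)"
    by (subst nn_integral_cmult[symmetric]) (auto simp: ennreal_mult)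
  also have "(\<integral>\<^sup>+x. ennreal (normal_density y \<sigma> x) \<partial>lborel) = 1"
    using s by (subst nn_integral_eq_integral) auto
  finally have "emeasure M {\<omega>\<in>space M. y < X \<omega>} \<le> ennreal (exp (- y\<^sup>2 / (2 * \<sigma>\<^sup>2)))" by simp
  then show ?thesis by (simp add: emeasure_eq_measure)
qed

lemma normal_tail_lower:
  assumes P: "prob_space M"
  assumes X: "distributed M lborel X (\<lambda>x. ennreal (normal_density 0 \<sigma> x))"
  assumes s: "0 < \<sigma>" and y: "0 \<le> y"
  shows "normal_density 0 \<sigma> (y + 1) \<le> measure M {\<omega>\<in>space M. y < X \<omega>}"
proof -
  interpret prob_space M by fact
  have set: "{\<omega>\<in>space M. y < X \<omega>} = X -` {y<..} \<inter> space M" by auto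
  have "ennreal (normal_density 0 \<sigma> (y + 1)) = (\<integral>\<^sup>+x. ennreal (normal_density 0 \<sigma> (y + 1)) * indicator {y<..y+1} x \<partial>lborel)"
    by (simp add: nn_integral_cmult_indicator)
  also have "\<dots> \<le> (\<integral>\<^sup>+x. ennreal (normal_density 0 \<sigma> x) * indicator {y<..} x \<partial>lborel)"
  proof (rule nn_integral_mono)
    fix x
    show "ennreal (normal_density 0 \<sigma> (y + 1)) * indicator {y<..y+1} x \<le> ennreal (normal_density 0 \<sigma> x) * indicator {y<..} x"
    proof (cases "x \<in> {y<..y+1}")
      case True
      then have "x\<^sup>2 \<le> (y+1)\<^sup>2" using y by (intro power_mono) auto
      then have "normal_density 0 \<sigma> (y + 1) \<le> normal_density 0 \<sigma> x"
        unfolding normal_density_def using s by (auto intro!: mult_left_mono divide_right_mono)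
      then show ?thesis using True by (simp add: ennreal_leI)
    qed simp
  qed
  also have "\<dots> = emeasure M {\<omega>\<in>space M. y < X \<omega>}"
    unfolding set by (rule distributed_emeasure[OF X, symmetric]) simp
  finally show ?thesis by (simp add: emeasure_eq_measure)
qed



lemma dyadic_witness:
  fixes f :: "real \<Rightarrow> real"
  assumes cont: "continuous_on {a..a+h} f" and h: "0 < h"
    and s: "s \<in> {a..a+h}" and z: "z < f s"
  shows "\<exists>m j. j \<le> (2::nat)^m \<and> z < f (a + h * real j / 2^m)"
proof -
  have "continuous (at s within {a..a+h}) f" using cont s by (simp add: continuous_on_eq_continuous_within)
  then obtain d where d: "d > 0" "\<And>s'. s' \<in> {a..a+h} \<Longrightarrow> dist s' s < d \<Longrightarrow> dist (f s') (f s) < f s - z"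
    using z unfolding continuous_within_eps_delta by (metis diff_gt_0_iff_gt)
  obtain m :: nat where m: "h / d < 2 ^ m"
    using real_arch_pow[of 2 "h / d"] by auto
  define q where "q = (2::real) ^ m"
  have q0: "0 < q" unfolding q_def by simp
  have hm: "h / q < d" using m d h q0 unfolding q_def[symmetric] by (simp add: field_simps)
  define j where "j = nat \<lfloor>(s - a) * q / h\<rfloor>"
  have fl0: "0 \<le> \<lfloor>(s - a) * q / h\<rfloor>" using s h q0 by auto
  have j1: "real j \<le> (s - a) * q / h" unfolding j_def using fl0 by simp
  have j2: "(s - a) * q / h < real j + 1" unfolding j_def using fl0 by linarith
  have sh: "(s - a) / h \<le> 1" using s h by (simp add: field_simps)
  have "(s - a) * q / h = (s - a) / h * q" by simp
  also have "\<dots> \<le> q" using sh s h q0 by (intro mult_left_le_one_le) auto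
  finally have "(s - a) * q / h \<le> q" .
  then have "real j \<le> q" using j1 by linarith
  then have jle: "j \<le> 2^m" unfolding q_def
    by (metis of_nat_le_iff of_nat_numeral of_nat_power)
  define t where "t = a + h * real j / q"
  have t1: "t \<le> s" using j1 h q0 unfolding t_def by (simp add: field_simps)
  have e: "(s - a) * q < (real j + 1) * h" using j2 h by (simp add: pos_divide_less_eq)
  have "s - t = ((s - a) * q - h * real j) / q" unfolding t_def using q0 by (simp add: field_simps)
  also have "\<dots> < h / q" using e q0 by (intro divide_strict_right_mono) (auto simp: algebra_simps)
  finally have t2: "s - t < h / q" .
  have ta: "a \<le> t" unfolding t_def using h q0 by simp
  have "t \<in> {a..a+h}" using ta t1 s by auto
  moreover have "dist t s < d" using t1 t2 hm by (simp add: dist_real_def)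
  ultimately have "dist (f t) (f s) < f s - z" using d by blast
  then have "z < f t" by (simp add: dist_real_def)
  then show ?thesis using jle unfolding t_def q_def by blast
qed

lemma integral_split_sum:
  fixes f :: "real \<Rightarrow> real"
  assumes int: "f integrable_on {0..1}" and n: "0 < n"
  shows "k \<le> n \<Longrightarrow> integral {0..real k / real n} f = (\<Sum>i<k. integral {real i / real n..real (Suc i) / real n} f)"
proof (induction k)
  case 0 then show ?case by simp
next
  case (Suc k)
  have sub: "f integrable_on {0..real (Suc k) / real n}"
    by (rule integrable_on_subinterval[OF int]) (use Suc.prems n in auto)
  have "integral {0..real (Suc k) / real n} f = integral {0..real k / real n} f + integral {real k / real n..real (Suc k) / real n} f"
    by (rule Henstock_Kurzweil_Integration.integral_combine[symmetric, OF _ _ sub]) (use n in \<open>auto simp: divide_right_mono\<close>)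
  then show ?case using Suc by simp
qed

lemma mono_integral_bounds:
  fixes f :: "real \<Rightarrow> real"
  assumes mono: "mono_on {0..1} f" and n: "0 < n"
  shows "(\<Sum>i<n. f (real i / real n)) / real n \<le> integral {0..1} f"
    and "integral {0..1} f \<le> (\<Sum>i<n. f (real (Suc i) / real n)) / real n"
proof -
  have int: "f integrable_on {0..1}" by (rule integrable_on_mono_on[OF mono])
  have eq: "integral {0..1} f = (\<Sum>i<n. integral {real i / real n..real (Suc i) / real n} f)"
    using integral_split_sum[OF int n, of n] n by simp
  have piece: "f (real i / real n) / real n \<le> integral {real i / real n..real (Suc i) / real n} f \<and>
      integral {real i / real n..real (Suc i) / real n} f \<le> f (real (Suc i) / real n) / real n" if i: "i < n" for i
  proof -
    let ?a = "real i / real n" and ?b = "real (Suc i) / real n"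
    have ab: "?a \<le> ?b" using n by (simp add: divide_right_mono)
    have sub: "{?a..?b} \<subseteq> {0..1}" using i n by (auto simp: field_simps)
    have fi: "f integrable_on {?a..?b}" by (rule integrable_on_subinterval[OF int sub])
    have aI: "?a \<in> {0..1}" "?b \<in> {0..1}" using sub ab by auto
    have tI: "\<And>t. t \<in> {?a..?b} \<Longrightarrow> t \<in> {0..1}" using sub by blast
    have lo: "\<And>t. t \<in> {?a..?b} \<Longrightarrow> f ?a \<le> f t" using aI tI by (intro mono_onD[OF mono]) auto
    have hi: "\<And>t. t \<in> {?a..?b} \<Longrightarrow> f t \<le> f ?b" using aI tI by (intro mono_onD[OF mono]) auto
    have len: "?b - ?a = 1 / real n" by (simp add: add_divide_distrib)
    have "integral {?a..?b} (\<lambda>t. f ?a) \<le> integral {?a..?b} f"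
      by (rule integral_le[OF integrable_const_ivl fi lo])
    moreover have "integral {?a..?b} f \<le> integral {?a..?b} (\<lambda>t. f ?b)"
      by (rule integral_le[OF fi integrable_const_ivl hi])
    ultimately show ?thesis using ab len by simp
  qed
  show "(\<Sum>i<n. f (real i / real n)) / real n \<le> integral {0..1} f"
    unfolding eq sum_divide_distrib by (rule sum_mono) (use piece in auto)
  show "integral {0..1} f \<le> (\<Sum>i<n. f (real (Suc i) / real n)) / real n"
    unfolding eq sum_divide_distrib by (rule sum_mono) (use piece in auto)
qed

lemma eventually_quadratic:
  fixes b c1 c0 :: real
  assumes "0 < b"
  shows "eventually (\<lambda>x. c1 * x + c0 \<le> b * x\<^sup>2) at_top"
proof -
  have "eventually (\<lambda>x. max 1 ((\<bar>c1\<bar> + \<bar>c0\<bar>) / b) \<le> x) at_top" by (rule eventually_ge_at_top)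
  then show ?thesis
  proof eventually_elim
    case (elim x)
    then have x1: "1 \<le> x" and x2: "(\<bar>c1\<bar> + \<bar>c0\<bar>) / b \<le> x" by auto
    have "\<bar>c1\<bar> + \<bar>c0\<bar> \<le> b * x" using x2 assms by (simp add: field_simps)
    then have "(\<bar>c1\<bar> + \<bar>c0\<bar>) * x \<le> b * x * x" using x1 by (simp add: mult_right_mono)
    moreover have "c1 * x + c0 \<le> (\<bar>c1\<bar> + \<bar>c0\<bar>) * x"
    proof -
      have "c1 * x \<le> \<bar>c1\<bar> * x" using x1 by (simp add: mult_right_mono)
      moreover have "\<bar>c0\<bar> \<le> \<bar>c0\<bar> * x" using x1 by (simp add: mult_le_cancel_left1)
      moreover have "c0 \<le> \<bar>c0\<bar>" by simp
      ultimately show ?thesis by (simp add: algebra_simps)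
    qed
    ultimately show ?case by (simp add: power2_eq_square mult.assoc)
  qed
qed

lemma sum_sq_eq: "(\<Sum>m<n. real m ^ 2) = (2 * real n ^ 3 - 3 * real n ^ 2 + real n) / 6"
  by (induction n) (simp_all add: power2_eq_square power3_eq_cube algebra_simps add_divide_distrib)

lemma sum_sq_upper: "(\<Sum>m<n. real m ^ 2) \<le> real n ^ 3 / 3"
proof -
  have "real n \<le> 3 * real n ^ 2" by (cases n) (auto simp: power2_eq_square)
  then show ?thesis unfolding sum_sq_eq by simp
qed

lemma sum_sq_lower: "real n ^ 3 / 3 - real n ^ 2 / 2 \<le> (\<Sum>m<n. real m ^ 2)"
  unfolding sum_sq_eq by simp



locale bm =
  fixes M :: "'a measure" and B :: "real \<Rightarrow> 'a \<Rightarrow> real"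
  assumes bm: "std_brownian_motion M B"

sublocale bm \<subseteq> prob_space M
  using bm unfolding std_brownian_motion_def by auto

context bm
begin

lemma meas: "0 \<le> t \<Longrightarrow> B t \<in> borel_measurable M"
  using bm unfolding std_brownian_motion_def by auto

lemma B0: "\<omega> \<in> space M \<Longrightarrow> B 0 \<omega> = 0"
  using bm unfolding std_brownian_motion_def by auto

lemma cont: "\<omega> \<in> space M \<Longrightarrow> continuous_on {0..} (\<lambda>t. B t \<omega>)"
  using bm unfolding std_brownian_motion_def by auto

lemma incr: "0 \<le> s \<Longrightarrow> s < t \<Longrightarrow>
    distributed M lborel (\<lambda>\<omega>. B t \<omega> - B s \<omega>) (\<lambda>x. ennreal (normal_density 0 (sqrt (t - s)) x))"
  using bm unfolding std_brownian_motion_def by auto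

lemma indep: "0 \<le> \<tau> 0 \<Longrightarrow> (\<forall>i<n. \<tau> i < \<tau> (Suc i)) \<Longrightarrow>
    indep_vars (\<lambda>_. borel) (\<lambda>i \<omega>. B (\<tau> (Suc i)) \<omega> - B (\<tau> i) \<omega>) {..<n}"
  using bm unfolding std_brownian_motion_def by auto

lemma cont_on: "\<omega> \<in> space M \<Longrightarrow> 0 \<le> a \<Longrightarrow> continuous_on {a..b} (\<lambda>t. B t \<omega>)"
  by (rule continuous_on_subset[OF cont]) auto

lemma bdd: "\<omega> \<in> space M \<Longrightarrow> 0 \<le> a \<Longrightarrow> bdd_above ((\<lambda>s. B s \<omega>) ` {a..b})"
  by (intro bounded_imp_bdd_above compact_imp_bounded compact_continuous_image cont_on) auto

lemma S_ge: "\<omega> \<in> space M \<Longrightarrow> 0 \<le> s \<Longrightarrow> s \<le> t \<Longrightarrow> B s \<omega> \<le> running_max B t \<omega>"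
  unfolding running_max_def by (rule cSup_upper) (auto intro: bdd)

lemma S_le: "0 \<le> t \<Longrightarrow> (\<And>s. 0 \<le> s \<Longrightarrow> s \<le> t \<Longrightarrow> B s \<omega> \<le> c) \<Longrightarrow> running_max B t \<omega> \<le> c"
  unfolding running_max_def by (rule cSup_least) auto

lemma S_gt_iff: "\<omega> \<in> space M \<Longrightarrow> 0 \<le> t \<Longrightarrow> c < running_max B t \<omega> \<longleftrightarrow> (\<exists>s\<in>{0..t}. c < B s \<omega>)"
  unfolding running_max_def by (subst less_cSup_iff) (auto intro: bdd)

lemma S_mono: "\<omega> \<in> space M \<Longrightarrow> 0 \<le> t \<Longrightarrow> t \<le> t' \<Longrightarrow> running_max B t \<omega> \<le> running_max B t' \<omega>"
  unfolding running_max_def by (rule cSup_subset_mono) (auto intro: bdd)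

lemma S_meas: assumes t: "0 \<le> t" shows "(\<lambda>\<omega>. running_max B t \<omega>) \<in> borel_measurable M"
proof (cases "t = 0")
  case True
  have "running_max B t \<omega> = B 0 \<omega>" for \<omega> unfolding running_max_def True by simp
  then show ?thesis using meas[of 0] by simp
next
  case False
  then have t0: "0 < t" using t by simp
  show ?thesis unfolding borel_measurable_iff_greater
  proof
    fix c
    have dir1: "\<exists>m j. j \<le> (2::nat)^m \<and> c < B (t * real j / 2^m) \<omega>"
      if \<omega>: "\<omega> \<in> space M" and cS: "c < running_max B t \<omega>" for \<omega>
    proof -
      obtain s where s: "s \<in> {0..t}" "c < B s \<omega>" using S_gt_iff[OF \<omega> t] cS by blast
      have "\<exists>m j. j \<le> (2::nat)^m \<and> c < (\<lambda>s. B s \<omega>) (0 + t * real j / 2^m)"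
        by (rule dyadic_witness[of 0 t]) (use cont_on[OF \<omega>] t0 s in auto)
      then show ?thesis by simp
    qed
    have dir2: "c < running_max B t \<omega>"
      if \<omega>: "\<omega> \<in> space M" and j: "j \<le> (2::nat)^m" and c: "c < B (t * real j / 2^m) \<omega>" for \<omega> m j
    proof -
      have "real j / 2^m \<le> 1" using j by (simp add: field_simps)
      then have "t * (real j / 2^m) \<le> t * 1" using t by (intro mult_left_mono) auto
      then have "t * real j / 2^m \<le> t" by simp
      then show ?thesis using S_gt_iff[OF \<omega> t] c t by force
    qed
    have eq: "{\<omega> \<in> space M. c < running_max B t \<omega>} =
      (\<Union>m. \<Union>j\<in>{..(2::nat)^m}. {\<omega> \<in> space M. c < B (t * real j / 2^m) \<omega>})"
      using dir1 dir2 by (auto simp: atMost_iff) (metis atMost_iff)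
    have Bs: "{\<omega> \<in> space M. c < B (t * real j / 2^m) \<omega>} \<in> sets M" for m j :: nat
    proof -
      have "B (t * real j / 2^m) \<in> borel_measurable M" using t by (intro meas) auto
      then show ?thesis by (simp add: borel_measurable_iff_greater)
    qed
    have fin: "(\<Union>j\<in>{..(2::nat)^m}. {\<omega> \<in> space M. c < B (t * real j / 2^m) \<omega>}) \<in> sets M" for m
      by (intro sets.finite_UN) (auto intro: Bs)
    show "{\<omega> \<in> space M. c < running_max B t \<omega>} \<in> sets M"
      unfolding eq using fin by (intro sets.countable_UN) auto
  qed
qed

lemma A_bounds:
  assumes \<omega>: "\<omega> \<in> space M" and n: "0 < n"
  shows "(\<Sum>i<n. running_max B (real i / real n) \<omega>) / real n \<le> max_area B \<omega>"
    and "max_area B \<omega> \<le> (\<Sum>i<n. running_max B (real (Suc i) / real n) \<omega>) / real n"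
proof -
  have mono: "mono_on {0..1} (\<lambda>t. running_max B t \<omega>)"
    by (rule mono_onI) (use S_mono[OF \<omega>] in auto)
  show "(\<Sum>i<n. running_max B (real i / real n) \<omega>) / real n \<le> max_area B \<omega>"
    unfolding max_area_def by (rule mono_integral_bounds(1)[OF mono n])
  show "max_area B \<omega> \<le> (\<Sum>i<n. running_max B (real (Suc i) / real n) \<omega>) / real n"
    unfolding max_area_def by (rule mono_integral_bounds(2)[OF mono n])
qed

lemma A_meas: "max_area B \<in> borel_measurable M"
proof (rule borel_measurable_LIMSEQ_real)
  let ?U = "\<lambda>n \<omega>. (\<Sum>i<Suc n. running_max B (real (Suc i) / real (Suc n)) \<omega>) / real (Suc n)"
  show "?U n \<in> borel_measurable M" for n
    by (intro borel_measurable_divide borel_measurable_sum S_meas borel_measurable_const) auto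
  fix \<omega> assume \<omega>: "\<omega> \<in> space M"
  let ?S = "\<lambda>t. running_max B t \<omega>"
  have tel: "(\<Sum>i<N. ?S (real (Suc i) / real N)) - (\<Sum>i<N. ?S (real i / real N)) = ?S 1 - ?S 0" if "0 < N" for N :: nat
  proof -
    have "(\<Sum>i<N. ?S (real (Suc i) / real N)) - (\<Sum>i<N. ?S (real i / real N)) =
        (\<Sum>i<N. ?S (real (Suc i) / real N) - ?S (real i / real N))" by (simp add: sum_subtractf)
    also have "\<dots> = ?S (real N / real N) - ?S (real 0 / real N)"
      by (rule sum_lessThan_telescope[where f = "\<lambda>i. ?S (real i / real N)"])
    finally show ?thesis using that by simp
  qed
  have b1: "0 \<le> ?U n \<omega> - max_area B \<omega>" for n using A_bounds(2)[OF \<omega>, of "Suc n"] by simp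
  have b2: "?U n \<omega> - max_area B \<omega> \<le> (?S 1 - ?S 0) / real (Suc n)" for n
  proof -
    have "?U n \<omega> - max_area B \<omega> \<le> ?U n \<omega> - (\<Sum>i<Suc n. ?S (real i / real (Suc n))) / real (Suc n)"
      using A_bounds(1)[OF \<omega>, of "Suc n"] by simp
    also have "\<dots> = (?S 1 - ?S 0) / real (Suc n)"
      using tel[of "Suc n"] by (simp add: diff_divide_distrib[symmetric])
    finally show ?thesis .
  qed
  have lim0: "(\<lambda>n. (?S 1 - ?S 0) / real (Suc n)) \<longlonglongrightarrow> 0"
    using tendsto_mult[OF tendsto_const LIMSEQ_inverse_real_of_nat, of "?S 1 - ?S 0"] by (simp add: divide_inverse)
  have "(\<lambda>n. ?U n \<omega> - max_area B \<omega>) \<longlonglongrightarrow> 0"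
    by (rule tendsto_sandwich[OF _ _ tendsto_const lim0]) (use b1 b2 in auto)
  then have "(\<lambda>n. ?U n \<omega> - max_area B \<omega> + max_area B \<omega>) \<longlonglongrightarrow> 0 + max_area B \<omega>"
    by (intro tendsto_add tendsto_const)
  then show "(\<lambda>n. ?U n \<omega>) \<longlonglongrightarrow> max_area B \<omega>" by simp
qed

end


context bm
begin

definition xi :: "nat \<Rightarrow> nat \<Rightarrow> 'a \<Rightarrow> real" where
  "xi n i \<omega> = B (real (Suc i) / real n) \<omega> - B (real i / real n) \<omega>"

lemma xi_meas: "xi n i \<in> borel_measurable M"
  unfolding xi_def[abs_def] by (intro borel_measurable_diff meas) auto

lemma xi_indep: assumes "0 < n" shows "indep_vars (\<lambda>_. borel) (xi n) {..<k}"
proof -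
  have "indep_vars (\<lambda>_. borel) (\<lambda>i \<omega>. B ((\<lambda>i. real i / real n) (Suc i)) \<omega> - B ((\<lambda>i. real i / real n) i) \<omega>) {..<k}"
    by (rule indep) (use assms in \<open>auto simp: divide_strict_right_mono\<close>)
  then show ?thesis by (simp add: xi_def[abs_def])
qed

lemma xi_dist: assumes "0 < n" shows "distributed M lborel (xi n i) (\<lambda>x. ennreal (normal_density 0 (sqrt (1 / real n)) x))"
proof -
  have "distributed M lborel (\<lambda>\<omega>. B (real (Suc i) / real n) \<omega> - B (real i / real n) \<omega>)
      (\<lambda>x. ennreal (normal_density 0 (sqrt (real (Suc i) / real n - real i / real n)) x))"
    by (rule incr) (use assms in \<open>auto simp: divide_strict_right_mono\<close>)
  moreover have "real (Suc i) / real n - real i / real n = 1 / real n" by (simp add: add_divide_distrib)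
  ultimately show ?thesis by (simp add: xi_def[abs_def])
qed

lemma B_grid: "\<omega> \<in> space M \<Longrightarrow> B (real m / real n) \<omega> = (\<Sum>i<m. xi n i \<omega>)"
  by (induction m) (auto simp: B0 xi_def)

lemma lin_dist:
  assumes n: "0 < n" and nz: "\<exists>i<n. c i \<noteq> 0"
  shows "distributed M lborel (\<lambda>\<omega>. \<Sum>i<n. c i * xi n i \<omega>)
           (\<lambda>x. ennreal (normal_density 0 (sqrt (\<Sum>i<n. (c i)\<^sup>2 / real n)) x))"
proof -
  define I where "I = {i. i < n \<and> c i \<noteq> 0}"
  have I: "finite I" "I \<noteq> {}" "I \<subseteq> {..<n}" using nz unfolding I_def by auto
  have ind: "indep_vars (\<lambda>_. borel) (\<lambda>i \<omega>. c i * xi n i \<omega>) I"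
    by (rule indep_vars_compose2[where X = "xi n" and Y = "\<lambda>i x. c i * x", OF indep_vars_subset[OF xi_indep[OF n] I(3)]]) auto
  have dist: "distributed M lborel (\<lambda>\<omega>. c i * xi n i \<omega>) (\<lambda>x. ennreal (normal_density 0 (\<bar>c i\<bar> * sqrt (1 / real n)) x))"
    if "i \<in> I" for i
  proof -
    have "c i \<noteq> 0" using that unfolding I_def by auto
    from normal_density_affine[OF xi_dist[OF n, of i] _ this, of 0] n
    show ?thesis by simp
  qed
  have pos: "0 < \<bar>c i\<bar> * sqrt (1 / real n)" if "i \<in> I" for i using that n unfolding I_def by auto
  from sum_indep_normal[OF I(1,2) ind pos dist]
  have *: "distributed M lborel (\<lambda>\<omega>. \<Sum>i\<in>I. c i * xi n i \<omega>)
      (\<lambda>x. ennreal (normal_density 0 (sqrt (\<Sum>i\<in>I. (\<bar>c i\<bar> * sqrt (1 / real n))\<^sup>2)) x))" by simp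
  have s1: "(\<Sum>i\<in>I. c i * xi n i \<omega>) = (\<Sum>i<n. c i * xi n i \<omega>)" for \<omega>
    by (rule sum.mono_neutral_left) (use I in \<open>auto simp: I_def\<close>)
  have s2: "(\<Sum>i\<in>I. (\<bar>c i\<bar> * sqrt (1 / real n))\<^sup>2) = (\<Sum>i<n. (c i)\<^sup>2 / real n)"
  proof -
    have "(\<Sum>i\<in>I. (\<bar>c i\<bar> * sqrt (1 / real n))\<^sup>2) = (\<Sum>i\<in>I. (c i)\<^sup>2 / real n)"
      using n by (intro sum.cong) (auto simp: power_mult_distrib)
    also have "\<dots> = (\<Sum>i<n. (c i)\<^sup>2 / real n)"
      by (rule sum.mono_neutral_left) (use I in \<open>auto simp: I_def\<close>)
    finally show ?thesis .
  qed
  show ?thesis using * unfolding s1 s2 .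
qed

lemma lin_set: "{\<omega> \<in> space M. y < (\<Sum>i<n. c i * xi n i \<omega>)} \<in> sets M"
proof -
  have "(\<lambda>\<omega>. \<Sum>i<n. c i * xi n i \<omega>) \<in> borel_measurable M"
    by (intro borel_measurable_sum borel_measurable_times borel_measurable_const xi_meas)
  then show ?thesis by (simp add: borel_measurable_iff_greater)
qed

lemma lin_upper:
  assumes n: "0 < n" and y: "0 \<le> y" and V: "0 < V" and var: "(\<Sum>i<n. (c i)\<^sup>2 / real n) \<le> V"
  shows "measure M {\<omega> \<in> space M. y < (\<Sum>i<n. c i * xi n i \<omega>)} \<le> exp (- y\<^sup>2 / (2 * V))"
proof (cases "\<exists>i<n. c i \<noteq> 0")
  case False
  then have e: "{\<omega> \<in> space M. y < (\<Sum>i<n. c i * xi n i \<omega>)} = {}" using y by auto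
  show ?thesis unfolding e by simp
next
  case True
  let ?v = "\<Sum>i<n. (c i)\<^sup>2 / real n"
  have v0: "0 < ?v"
  proof -
    obtain i where i: "i < n" "c i \<noteq> 0" using True by blast
    have "(c i)\<^sup>2 / real n \<le> ?v" by (rule member_le_sum) (use i in auto)
    moreover have "0 < (c i)\<^sup>2 / real n" using i n by auto
    ultimately show ?thesis by linarith
  qed
  have "measure M {\<omega> \<in> space M. y < (\<Sum>i<n. c i * xi n i \<omega>)} \<le> exp (- y\<^sup>2 / (2 * (sqrt ?v)\<^sup>2))"
    by (rule normal_tail_upper[OF prob_space_axioms lin_dist[OF n True] _ y]) (use v0 in auto)
  also have "\<dots> = exp (- y\<^sup>2 / (2 * ?v))" using v0 by simp
  also have "\<dots> \<le> exp (- y\<^sup>2 / (2 * V))"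
  proof -
    have "y\<^sup>2 / (2 * V) \<le> y\<^sup>2 / (2 * ?v)" using v0 var by (intro divide_left_mono) auto
    then show ?thesis by simp
  qed
  finally show ?thesis .
qed

lemma lin_lower:
  assumes n: "0 < n" and y: "0 \<le> y" and nz: "\<exists>i<n. c i \<noteq> 0"
  shows "normal_density 0 (sqrt (\<Sum>i<n. (c i)\<^sup>2 / real n)) (y + 1) \<le> measure M {\<omega> \<in> space M. y < (\<Sum>i<n. c i * xi n i \<omega>)}"
proof -
  let ?v = "\<Sum>i<n. (c i)\<^sup>2 / real n"
  have v0: "0 < ?v"
  proof -
    obtain i where i: "i < n" "c i \<noteq> 0" using nz by blast
    have "(c i)\<^sup>2 / real n \<le> ?v" by (rule member_le_sum) (use i in auto)
    moreover have "0 < (c i)\<^sup>2 / real n" using i n by auto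
    ultimately show ?thesis by linarith
  qed
  show ?thesis
    by (rule normal_tail_lower[OF prob_space_axioms lin_dist[OF n nz] _ y]) (use v0 in auto)
qed

end


lemma chain_bound:
  fixes f :: "real \<Rightarrow> real" and w :: "nat \<Rightarrow> real"
  assumes inc: "\<And>l j. l \<le> m \<Longrightarrow> j < 2^l \<Longrightarrow> \<bar>f (a + h * real (Suc j) / 2^l) - f (a + h * real j / 2^l)\<bar> \<le> w l"
    and w0: "\<And>l. 0 \<le> w l"
  shows "j \<le> 2^m \<Longrightarrow> f (a + h * real j / 2^m) - f a \<le> (\<Sum>l\<le>m. w l)"
  using inc
proof (induction m arbitrary: j)
  case 0
  then have "j = 0 \<or> j = 1" by auto
  then show ?case
  proof
    assume "j = 0" then show ?thesis using w0[of 0] by simp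
  next
    assume j: "j = 1"
    have "\<bar>f (a + h * real (Suc 0) / 2^0) - f (a + h * real 0 / 2^0)\<bar> \<le> w 0" by (rule "0.prems"(2)) auto
    then show ?thesis using j by simp
  qed
next
  case (Suc m)
  have IH: "f (a + h * real k / 2^m) - f a \<le> (\<Sum>l\<le>m. w l)" if "k \<le> 2^m" for k
    by (rule Suc.IH[OF that]) (use Suc.prems(2) in auto)
  have half: "a + h * real (2 * k) / 2^(Suc m) = a + h * real k / 2^m" for k by (simp add: field_simps)
  show ?case
  proof (cases "even j")
    case True
    then obtain k where k: "j = 2 * k" by blast
    then have "k \<le> 2^m" using Suc.prems(1) by simp
    then have "f (a + h * real j / 2^(Suc m)) - f a \<le> (\<Sum>l\<le>m. w l)" using IH half k by simp
    then show ?thesis using w0[of "Suc m"] by simp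
  next
    case False
    then obtain k where k: "j = Suc (2 * k)" by (metis oddE Suc_eq_plus1)
    then have kl: "k < 2^m" using Suc.prems(1) by simp
    have d: "\<bar>f (a + h * real (Suc (2*k)) / 2^(Suc m)) - f (a + h * real (2*k) / 2^(Suc m))\<bar> \<le> w (Suc m)"
      by (rule Suc.prems(2)) (use kl in auto)
    have "f (a + h * real (2 * k) / 2^(Suc m)) - f a \<le> (\<Sum>l\<le>m. w l)" using IH[of k] kl half by simp
    then show ?thesis using d k by simp
  qed
qed

lemma (in prob_space) normal_abs_tail:
  assumes X: "distributed M lborel X (\<lambda>x. ennreal (normal_density 0 \<sigma> x))"
  assumes s: "0 < \<sigma>" and y: "0 \<le> y"
  shows "measure M {\<omega>\<in>space M. y < \<bar>X \<omega>\<bar>} \<le> 2 * exp (- y\<^sup>2 / (2 * \<sigma>\<^sup>2))"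
proof -
  have Xm: "distributed M lborel (\<lambda>x. 0 + -1 * X x) (\<lambda>x. ennreal (normal_density (0 + -1 * 0) (\<bar>-1\<bar> * \<sigma>) x))"
    by (rule normal_density_affine[OF X s]) simp
  then have Xm': "distributed M lborel (\<lambda>x. - X x) (\<lambda>x. ennreal (normal_density 0 \<sigma> x))" by simp
  have meas: "X \<in> borel_measurable M" using X by (auto dest: distributed_measurable)
  have meas': "(\<lambda>\<omega>. - X \<omega>) \<in> borel_measurable M" using meas by (rule borel_measurable_uminus)
  have s1: "{\<omega>\<in>space M. y < X \<omega>} \<in> sets M" "{\<omega>\<in>space M. y < - X \<omega>} \<in> sets M"
    using meas meas' unfolding borel_measurable_iff_greater by blast+
  have "{\<omega>\<in>space M. y < \<bar>X \<omega>\<bar>} = {\<omega>\<in>space M. y < X \<omega>} \<union> {\<omega>\<in>space M. y < - X \<omega>}" by auto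
  then have "measure M {\<omega>\<in>space M. y < \<bar>X \<omega>\<bar>} \<le> measure M {\<omega>\<in>space M. y < X \<omega>} + measure M {\<omega>\<in>space M. y < - X \<omega>}"
    using measure_Un_le[OF s1] by simp
  also have "\<dots> \<le> exp (- y\<^sup>2 / (2 * \<sigma>\<^sup>2)) + exp (- y\<^sup>2 / (2 * \<sigma>\<^sup>2))"
    by (intro add_mono normal_tail_upper[OF prob_space_axioms X s y] normal_tail_upper[OF prob_space_axioms Xm' s y])
  finally show ?thesis by simp
qed

lemma geom_half: "(\<Sum>l\<le>m. (1/2::real)^l) \<le> 2"
proof -
  have "(\<Sum>l\<le>m. (1/2::real)^l) = 2 - (1/2)^m" by (induction m) auto
  then show ?thesis by simp
qed

lemma geom_78: "(\<Sum>l\<le>m. (7/8::real)^l) \<le> 8"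
proof -
  have "(\<Sum>l\<le>m. (7/8::real)^l) = 8 - 8 * (7/8)^(Suc m)" by (induction m) auto
  then show ?thesis by simp
qed

context bm
begin

lemma osc_level:
  assumes a: "0 \<le> a" and h: "0 < h" and z: "0 < z" and K: "2 * ln 4 \<le> z\<^sup>2 / (128 * h)"
  shows "measure M {\<omega>\<in>space M. \<exists>j\<le>(2::nat)^m. B a \<omega> + z < B (a + h * real j / 2^m) \<omega>}
           \<le> 4 * exp (- (z\<^sup>2 / (128 * h)))"
proof -
  define K where "K = z\<^sup>2 / (128 * h)"
  define w where "w l = z / 8 * (7/8::real)^l" for l
  define \<Delta> where "\<Delta> l j \<omega> = B (a + h * real (Suc j) / 2^l) \<omega> - B (a + h * real j / 2^l) \<omega>" for l j :: nat and \<omega>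
  define F where "F l j = {\<omega>\<in>space M. w l < \<bar>\<Delta> l j \<omega>\<bar>}" for l j :: nat
  have w0: "0 \<le> w l" for l using z unfolding w_def by simp
  have tpos: "0 \<le> a + h * real j / 2^l" for j l :: nat using a h by simp
  have \<Delta>dist: "distributed M lborel (\<Delta> l j) (\<lambda>x. ennreal (normal_density 0 (sqrt (h / 2^l)) x))" for l j
  proof -
    have "distributed M lborel (\<lambda>\<omega>. B (a + h * real (Suc j) / 2^l) \<omega> - B (a + h * real j / 2^l) \<omega>)
        (\<lambda>x. ennreal (normal_density 0 (sqrt ((a + h * real (Suc j) / 2^l) - (a + h * real j / 2^l))) x))"
      by (rule incr[OF tpos]) (use h in \<open>simp add: field_simps\<close>)
    moreover have "(a + h * real (Suc j) / 2^l) - (a + h * real j / 2^l) = h / 2^l" by (simp add: field_simps)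
    ultimately show ?thesis unfolding \<Delta>_def[abs_def] by simp
  qed
  have Fsets: "F l j \<in> sets M" for l j
  proof -
    have "\<Delta> l j \<in> borel_measurable M" using \<Delta>dist[of l j] by (auto dest: distributed_measurable)
    then have "(\<lambda>\<omega>. \<bar>\<Delta> l j \<omega>\<bar>) \<in> borel_measurable M" by (rule borel_measurable_abs)
    then show ?thesis unfolding F_def by (simp add: borel_measurable_iff_greater)
  qed
  have K4: "exp (- K / 2) \<le> 1/4"
  proof -
    have "exp (- K / 2) \<le> exp (- ln 4)" using K unfolding K_def by simp
    then show ?thesis by (simp add: exp_minus)
  qed
  have Fbound: "measure M (F l j) \<le> 2 * exp (- K) * (1/4)^l" for l j
  proof -
    have e1: "measure M (F l j) \<le> 2 * exp (- (w l)\<^sup>2 / (2 * (sqrt (h / 2^l))\<^sup>2))"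
      unfolding F_def by (rule normal_abs_tail[OF \<Delta>dist]) (use h w0 in auto)
    have e2: "(w l)\<^sup>2 / (2 * (sqrt (h / 2^l))\<^sup>2) = K * (49/32)^l"
    proof -
      have p: "((7/8::real)^l)\<^sup>2 = (49/64)^l"
      proof -
        have "((7/8::real)^l)\<^sup>2 = ((7/8)\<^sup>2)^l" by (metis power_mult mult.commute)
        then show ?thesis by (simp add: power2_eq_square)
      qed
      have w2: "(w l)\<^sup>2 = z\<^sup>2 / 64 * (49/64)^l" unfolding w_def power_mult_distrib p
        by (simp add: power2_eq_square)
      have sq: "(sqrt (h / 2^l))\<^sup>2 = h / 2^l" using h by simp
      have gen: "\<And>p q::real. 0 < q \<Longrightarrow> z\<^sup>2 / 64 * p / (2 * (h / q)) = z\<^sup>2 / (128 * h) * (p * q)"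
        using h by (simp add: field_simps)
      have "(w l)\<^sup>2 / (2 * (sqrt (h / 2^l))\<^sup>2) = z\<^sup>2 / (128 * h) * ((49/64)^l * 2^l)"
        unfolding w2 sq by (rule gen) simp
      also have "(49/64::real)^l * 2^l = (49/32)^l" by (simp add: power_mult_distrib[symmetric])
      finally show ?thesis unfolding K_def by simp
    qed
    have e1': "measure M (F l j) \<le> 2 * exp (- (K * (49/32)^l))"
      using e1 by (simp only: minus_divide_left[symmetric] e2)
    have e3: "K * (1 + real l / 2) \<le> K * (49/32)^l"
    proof -
      have "1 + real l * (17/32) \<le> (1 + 17/32::real)^l" by (rule Bernoulli_inequality) simp
      then have "1 + real l / 2 \<le> (49/32::real)^l" by simp
      moreover have "0 \<le> K" unfolding K_def using h by simp
      ultimately show ?thesis by (intro mult_left_mono)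
    qed
    have e4: "exp (- K * (1 + real l / 2)) = exp (- K) * exp (- K / 2) ^ l"
      by (simp add: algebra_simps exp_add[symmetric] exp_of_nat_mult[symmetric])
    note e1'
    also have "2 * exp (- (K * (49/32)^l)) \<le> 2 * exp (- K * (1 + real l / 2))" using e3 by simp
    also have "\<dots> = 2 * (exp (- K) * exp (- K / 2) ^ l)" using e4 by simp
    also have "\<dots> \<le> 2 * (exp (- K) * (1/4)^l)"
      using K4 by (intro mult_left_mono power_mono) auto
    finally show ?thesis by simp
  qed
  have sub: "{\<omega>\<in>space M. \<exists>j\<le>(2::nat)^m. B a \<omega> + z < B (a + h * real j / 2^m) \<omega>} \<subseteq> (\<Union>l\<le>m. \<Union>j<2^l. F l j)"
  proof (rule subsetI, rule ccontr)
    fix \<omega> assume \<omega>: "\<omega> \<in> {\<omega>\<in>space M. \<exists>j\<le>(2::nat)^m. B a \<omega> + z < B (a + h * real j / 2^m) \<omega>}"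
      and nin: "\<omega> \<notin> (\<Union>l\<le>m. \<Union>j<2^l. F l j)"
    then obtain j where j: "j \<le> 2^m" "B a \<omega> + z < B (a + h * real j / 2^m) \<omega>" and \<omega>s: "\<omega> \<in> space M" by auto
    have inc: "\<bar>B (a + h * real (Suc j) / 2^l) \<omega> - B (a + h * real j / 2^l) \<omega>\<bar> \<le> w l" if "l \<le> m" "j < 2^l" for l j
      using nin that \<omega>s unfolding F_def \<Delta>_def by force
    have "(\<lambda>s. B s \<omega>) (a + h * real j / 2^m) - (\<lambda>s. B s \<omega>) a \<le> (\<Sum>l\<le>m. w l)"
      by (rule chain_bound[OF _ w0 j(1)]) (use inc in auto)
    also have "(\<Sum>l\<le>m. w l) = z / 8 * (\<Sum>l\<le>m. (7/8::real)^l)" unfolding w_def by (simp add: sum_distrib_left)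
    also have "\<dots> \<le> z / 8 * 8" using z geom_78[of m] by (intro mult_left_mono) auto
    finally show False using j(2) by simp
  qed
  have "measure M {\<omega>\<in>space M. \<exists>j\<le>(2::nat)^m. B a \<omega> + z < B (a + h * real j / 2^m) \<omega>} \<le> measure M (\<Union>l\<le>m. \<Union>j<2^l. F l j)"
    by (rule finite_measure_mono[OF sub]) (use Fsets in auto)
  also have "\<dots> \<le> (\<Sum>l\<le>m. measure M (\<Union>j<2^l. F l j))"
    by (rule measure_UNION_le) (use Fsets in auto)
  also have "\<dots> \<le> (\<Sum>l\<le>m. (\<Sum>j<(2::nat)^l. measure M (F l j)))"
    by (intro sum_mono measure_UNION_le) (use Fsets in auto)
  also have "\<dots> \<le> (\<Sum>l\<le>m. (\<Sum>j<(2::nat)^l. 2 * exp (- K) * (1/4)^l))"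
    by (intro sum_mono Fbound)
  also have "\<dots> = (\<Sum>l\<le>m. 2 * exp (- K) * (1/2)^l)"
  proof (intro sum.cong refl)
    fix l
    have "(2::real)^l * (1/4)^l = (1/2)^l" by (simp add: power_mult_distrib[symmetric])
    then show "(\<Sum>j<(2::nat)^l. 2 * exp (- K) * (1/4)^l) = 2 * exp (- K) * (1/2)^l"
      by (simp add: algebra_simps)
  qed
  also have "\<dots> = 2 * exp (- K) * (\<Sum>l\<le>m. (1/2)^l)" by (simp add: sum_distrib_left)
  also have "\<dots> \<le> 2 * exp (- K) * 2" by (intro mult_left_mono geom_half) auto
  finally show ?thesis unfolding K_def by simp
qed

lemma osc_total:
  assumes a: "0 \<le> a" and h: "0 < h" and z: "0 < z" and K: "2 * ln 4 \<le> z\<^sup>2 / (128 * h)"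
  shows "{\<omega>\<in>space M. \<exists>s\<in>{a..a+h}. B a \<omega> + z < B s \<omega>} \<in> sets M"
    and "measure M {\<omega>\<in>space M. \<exists>s\<in>{a..a+h}. B a \<omega> + z < B s \<omega>} \<le> 4 * exp (- (z\<^sup>2 / (128 * h)))"
proof -
  define E where "E m = {\<omega>\<in>space M. \<exists>j\<le>(2::nat)^m. B a \<omega> + z < B (a + h * real j / 2^m) \<omega>}" for m
  have pt: "a + h * real j / 2^m \<in> {a..a+h}" if "j \<le> 2^m" for j m :: nat
  proof -
    have "real j / 2^m \<le> 1" using that by (simp add: field_simps)
    then have "h * (real j / 2^m) \<le> h * 1" using h by (intro mult_left_mono) auto
    then show ?thesis using h by auto
  qed
  have Esets: "E m \<in> sets M" for m
  proof -
    have "E m = (\<Union>j\<in>{..(2::nat)^m}. {\<omega>\<in>space M. z < B (a + h * real j / 2^m) \<omega> - B a \<omega>})"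
      unfolding E_def by auto
    moreover have "{\<omega>\<in>space M. z < B (a + h * real j / 2^m) \<omega> - B a \<omega>} \<in> sets M" for j
    proof -
      have "(\<lambda>\<omega>. B (a + h * real j / 2^m) \<omega> - B a \<omega>) \<in> borel_measurable M"
        using a h by (intro borel_measurable_diff meas) auto
      then show ?thesis unfolding borel_measurable_iff_greater by blast
    qed
    ultimately show ?thesis by auto
  qed
  have inc: "incseq E"
  proof (rule incseq_SucI)
    fix m
    have half: "a + h * real (2 * k) / 2^(Suc m) = a + h * real k / 2^m" for k by (simp add: field_simps)
    show "E m \<subseteq> E (Suc m)"
    proof
      fix \<omega> assume "\<omega> \<in> E m"
      then obtain j where "\<omega> \<in> space M" "j \<le> 2^m" "B a \<omega> + z < B (a + h * real j / 2^m) \<omega>" unfolding E_def by auto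
      then show "\<omega> \<in> E (Suc m)" unfolding E_def using half[of j] by (intro CollectI conjI exI[of _ "2*j"]) auto
    qed
  qed
  have eq: "{\<omega>\<in>space M. \<exists>s\<in>{a..a+h}. B a \<omega> + z < B s \<omega>} = (\<Union>m. E m)"
  proof safe
    fix \<omega> s assume \<omega>: "\<omega> \<in> space M" and s: "s \<in> {a..a+h}" and zs: "B a \<omega> + z < B s \<omega>"
    have "continuous_on {a..a+h} (\<lambda>s. B s \<omega> - B a \<omega>)"
      by (intro continuous_intros cont_on[OF \<omega> a])
    from dyadic_witness[OF this h s, of z] zs
    obtain m j where "j \<le> 2^m" "z < B (a + h * real j / 2^m) \<omega> - B a \<omega>" by auto
    then show "\<omega> \<in> (\<Union>m. E m)" unfolding E_def using \<omega> by (auto simp: algebra_simps)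
  next
    fix \<omega> m assume "\<omega> \<in> E m"
    then show "\<omega> \<in> space M" unfolding E_def by auto
  next
    fix \<omega> m assume "\<omega> \<in> E m"
    then obtain j where "\<omega> \<in> space M" "j \<le> 2^m" "B a \<omega> + z < B (a + h * real j / 2^m) \<omega>" unfolding E_def by auto
    then show "\<exists>s\<in>{a..a+h}. B a \<omega> + z < B s \<omega>" using pt by blast
  qed
  show "{\<omega>\<in>space M. \<exists>s\<in>{a..a+h}. B a \<omega> + z < B s \<omega>} \<in> sets M"
    unfolding eq using Esets by auto
  have lim: "(\<lambda>m. measure M (E m)) \<longlonglongrightarrow> measure M (\<Union>m. E m)"
    by (rule finite_Lim_measure_incseq) (use Esets inc in auto)
  have "measure M (\<Union>m. E m) \<le> 4 * exp (- (z\<^sup>2 / (128 * h)))"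
    by (rule LIMSEQ_le_const2[OF lim]) (use osc_level[OF a h z K] in \<open>auto simp: E_def\<close>)
  then show "measure M {\<omega>\<in>space M. \<exists>s\<in>{a..a+h}. B a \<omega> + z < B s \<omega>} \<le> 4 * exp (- (z\<^sup>2 / (128 * h)))"
    unfolding eq .
qed

end


lemma card_gt: "card {k \<in> {..<n}. i < k} = n - Suc i"
proof -
  have "{k \<in> {..<n}. i < k} = {Suc i..<n}" by auto
  then show ?thesis by simp
qed

context bm
begin

definition coef :: "nat \<Rightarrow> (nat \<Rightarrow> nat) \<Rightarrow> nat \<Rightarrow> real" where
  "coef n \<tau> i = real (card {k \<in> {..<n}. i < \<tau> k}) / real n"

lemma swap_sum:
  assumes \<omega>: "\<omega> \<in> space M" and \<tau>: "\<And>k. k < n \<Longrightarrow> \<tau> k \<le> k"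
  shows "(\<Sum>k<n. B (real (\<tau> k) / real n) \<omega>) / real n = (\<Sum>i<n. coef n \<tau> i * xi n i \<omega>)"
proof -
  have "(\<Sum>k<n. B (real (\<tau> k) / real n) \<omega>) = (\<Sum>k<n. \<Sum>i<n. if i < \<tau> k then xi n i \<omega> else 0)"
  proof (rule sum.cong[OF refl])
    fix k assume k: "k \<in> {..<n}"
    have "B (real (\<tau> k) / real n) \<omega> = (\<Sum>i<\<tau> k. xi n i \<omega>)" by (rule B_grid[OF \<omega>])
    also have "{..<\<tau> k} = {i \<in> {..<n}. i < \<tau> k}" using \<tau>[of k] k by auto
    also have "(\<Sum>i\<in>{i \<in> {..<n}. i < \<tau> k}. xi n i \<omega>) = (\<Sum>i<n. if i < \<tau> k then xi n i \<omega> else 0)"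
      by (rule sum.inter_filter) simp
    finally show "B (real (\<tau> k) / real n) \<omega> = (\<Sum>i<n. if i < \<tau> k then xi n i \<omega> else 0)" .
  qed
  also have "\<dots> = (\<Sum>i<n. \<Sum>k<n. if i < \<tau> k then xi n i \<omega> else 0)" by (rule sum.swap)
  also have "\<dots> = (\<Sum>i<n. real (card {k \<in> {..<n}. i < \<tau> k}) * xi n i \<omega>)"
  proof (rule sum.cong[OF refl])
    fix i
    have "(\<Sum>k<n. if i < \<tau> k then xi n i \<omega> else 0) = (\<Sum>k\<in>{k \<in> {..<n}. i < \<tau> k}. xi n i \<omega>)"
      by (rule sum.inter_filter[symmetric]) simp
    also have "\<dots> = real (card {k \<in> {..<n}. i < \<tau> k}) * xi n i \<omega>" by simp
    finally show "(\<Sum>k<n. if i < \<tau> k then xi n i \<omega> else 0) = real (card {k \<in> {..<n}. i < \<tau> k}) * xi n i \<omega>" .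
  qed
  finally show ?thesis unfolding coef_def by (simp add: sum_divide_distrib)
qed

lemma coef_var_upper:
  assumes n: "0 < n" and \<tau>: "\<And>k. k < n \<Longrightarrow> \<tau> k \<le> k"
  shows "(\<Sum>i<n. (coef n \<tau> i)\<^sup>2 / real n) \<le> 1 / 3"
proof -
  have c: "coef n \<tau> i \<le> real (n - Suc i) / real n" for i
  proof -
    have "{k \<in> {..<n}. i < \<tau> k} \<subseteq> {k \<in> {..<n}. i < k}" using \<tau> by (auto dest: le_trans[rotated] simp: less_le_trans)
    then have "card {k \<in> {..<n}. i < \<tau> k} \<le> card {k \<in> {..<n}. i < k}" by (intro card_mono) auto
    then show ?thesis unfolding coef_def card_gt using n by (simp add: divide_right_mono)
  qed
  have "(\<Sum>i<n. (coef n \<tau> i)\<^sup>2 / real n) \<le> (\<Sum>i<n. (real (n - Suc i) / real n)\<^sup>2 / real n)"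
    by (intro sum_mono divide_right_mono power_mono c) (auto simp: coef_def)
  also have "\<dots> = (\<Sum>i<n. (\<lambda>m. real m ^ 2 / real n ^ 3) (n - Suc i))"
    by (intro sum.cong refl) (simp add: power2_eq_square power3_eq_cube)
  also have "\<dots> = (\<Sum>m<n. real m ^ 2 / real n ^ 3)" by (rule sum.nat_diff_reindex)
  also have "\<dots> = (\<Sum>m<n. real m ^ 2) / real n ^ 3" by (simp add: sum_divide_distrib)
  also have "\<dots> \<le> (real n ^ 3 / 3) / real n ^ 3" using n by (intro divide_right_mono sum_sq_upper) auto
  also have "\<dots> = 1 / 3" using n by simp
  finally show ?thesis .
qed

lemma coef_var_id:
  assumes n: "0 < n"
  shows "(\<Sum>i<n. (coef n id i)\<^sup>2 / real n) = (\<Sum>m<n. real m ^ 2) / real n ^ 3"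
proof -
  have "(\<Sum>i<n. (coef n id i)\<^sup>2 / real n) = (\<Sum>i<n. (\<lambda>m. real m ^ 2 / real n ^ 3) (n - Suc i))"
    unfolding coef_def id_def card_gt by (intro sum.cong refl) (simp add: power2_eq_square power3_eq_cube)
  also have "\<dots> = (\<Sum>m<n. real m ^ 2 / real n ^ 3)" by (rule sum.nat_diff_reindex)
  finally show ?thesis by (simp add: sum_divide_distrib)
qed

lemma S_step:
  assumes \<omega>: "\<omega> \<in> space M" and n: "0 < n" and k: "k < n"
    and osc: "\<And>i s. i < n \<Longrightarrow> s \<in> {real i / real n..real i / real n + 1 / real n} \<Longrightarrow> B s \<omega> \<le> B (real i / real n) \<omega> + w"
  shows "running_max B (real (Suc k) / real n) \<omega> \<le> Max ((\<lambda>i. B (real i / real n) \<omega>) ` {..k}) + w"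
proof (rule S_le)
  show "0 \<le> real (Suc k) / real n" by simp
  fix s assume s0: "0 \<le> s" and s1: "s \<le> real (Suc k) / real n"
  define i where "i = min k (nat \<lfloor>s * real n\<rfloor>)"
  have ik: "i \<le> k" unfolding i_def by simp
  have fl: "real (nat \<lfloor>s * real n\<rfloor>) \<le> s * real n" using s0 n by simp
  have fl2: "s * real n < real (nat \<lfloor>s * real n\<rfloor>) + 1" using s0 n by linarith
  have sn: "s * real n \<le> real (Suc k)" using s1 n by (simp add: field_simps)
  have lo: "real i \<le> s * real n" using fl unfolding i_def by (simp add: min_def)
  have hi: "s * real n \<le> real i + 1"
  proof (cases "k \<le> nat \<lfloor>s * real n\<rfloor>")
    case True then have "i = k" unfolding i_def by simp
    then show ?thesis using sn by simp
  next
    case False then have "i = nat \<lfloor>s * real n\<rfloor>" unfolding i_def by simp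
    then show ?thesis using fl2 by simp
  qed
  have "s \<in> {real i / real n..real i / real n + 1 / real n}"
    using lo hi n by (auto simp: field_simps)
  then have "B s \<omega> \<le> B (real i / real n) \<omega> + w" using osc[of i] ik k by auto
  also have "B (real i / real n) \<omega> \<le> Max ((\<lambda>i. B (real i / real n) \<omega>) ` {..k})"
    using ik by (intro Max_ge) auto
  finally show "B s \<omega> \<le> Max ((\<lambda>i. B (real i / real n) \<omega>) ` {..k}) + w" by simp
qed

lemma upper_fixed:
  assumes n: "0 < n" and \<delta>: "0 < \<delta>" "\<delta> < 1" and x: "0 < x"
    and K: "2 * ln 4 \<le> (\<delta> * x)\<^sup>2 / (128 * (1 / real n))"
  shows "measure M {\<omega>\<in>space M. max_area B \<omega> > x} \<le>
     real (card (Pi\<^sub>E {..<n} (\<lambda>k. {..k}))) * exp (- ((1 - \<delta>) * x)\<^sup>2 / (2 * (1/3)))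
     + real n * (4 * exp (- ((\<delta> * x)\<^sup>2 / (128 * (1 / real n)))))"
proof -
  define T where "T = Pi\<^sub>E {..<n} (\<lambda>k. {..k::nat})"
  define G where "G \<tau> = {\<omega>\<in>space M. (1 - \<delta>) * x < (\<Sum>i<n. coef n \<tau> i * xi n i \<omega>)}" for \<tau>
  define Q where "Q i = {\<omega>\<in>space M. \<exists>s\<in>{real i / real n..real i / real n + 1 / real n}. B (real i / real n) \<omega> + \<delta> * x < B s \<omega>}" for i
  have finT: "finite T" unfolding T_def by (intro finite_PiE) auto
  have Tdom: "\<tau> k \<le> k" if "\<tau> \<in> T" "k < n" for \<tau> k using that unfolding T_def by (auto simp: PiE_def Pi_def)
  have Gsets: "G \<tau> \<in> sets M" for \<tau> unfolding G_def by (rule lin_set)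
  have hpos: "0 < 1 / real n" using n by simp
  have zpos: "0 < \<delta> * x" using \<delta> x by simp
  have Osets: "Q i \<in> sets M" and Obound: "measure M (Q i) \<le> 4 * exp (- ((\<delta> * x)\<^sup>2 / (128 * (1 / real n))))" for i
    unfolding Q_def using osc_total[OF _ hpos zpos K, of "real i / real n"] by auto
  have sub: "{\<omega>\<in>space M. max_area B \<omega> > x} \<subseteq> (\<Union>\<tau>\<in>T. G \<tau>) \<union> (\<Union>i<n. Q i)"
  proof
    fix \<omega> assume "\<omega> \<in> {\<omega>\<in>space M. max_area B \<omega> > x}"
    then have \<omega>: "\<omega> \<in> space M" and Ax: "x < max_area B \<omega>" by auto
    show "\<omega> \<in> (\<Union>\<tau>\<in>T. G \<tau>) \<union> (\<Union>i<n. Q i)"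
    proof (cases "\<omega> \<in> (\<Union>i<n. Q i)")
      case True then show ?thesis by blast
    next
      case False
      then have osc: "B s \<omega> \<le> B (real i / real n) \<omega> + \<delta> * x"
        if "i < n" "s \<in> {real i / real n..real i / real n + 1 / real n}" for i s
        using that \<omega> unfolding Q_def by force
      define Mx where "Mx k = Max ((\<lambda>i. B (real i / real n) \<omega>) ` {..k})" for k
      have "\<exists>i\<le>k. B (real i / real n) \<omega> = Mx k" for k
      proof -
        have "Mx k \<in> (\<lambda>i. B (real i / real n) \<omega>) ` {..k}" unfolding Mx_def by (intro Max_in) auto
        then show ?thesis by auto
      qed
      then obtain \<sigma> where \<sigma>: "\<And>k. \<sigma> k \<le> k \<and> B (real (\<sigma> k) / real n) \<omega> = Mx k" by metis
      define \<tau> where "\<tau> = restrict \<sigma> {..<n}"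
      have \<tau>T: "\<tau> \<in> T" unfolding T_def \<tau>_def using \<sigma> by auto
      have \<tau>le: "\<tau> k \<le> k" if "k < n" for k using \<tau>T that by (rule Tdom)
      have \<tau>val: "B (real (\<tau> k) / real n) \<omega> = Mx k" if "k < n" for k using \<sigma> that unfolding \<tau>_def by auto
      have step: "running_max B (real (Suc k) / real n) \<omega> \<le> Mx k + \<delta> * x" if "k < n" for k
        unfolding Mx_def by (rule S_step[OF \<omega> n that osc])
      have "max_area B \<omega> \<le> (\<Sum>k<n. running_max B (real (Suc k) / real n) \<omega>) / real n"
        by (rule A_bounds(2)[OF \<omega> n])
      also have "\<dots> \<le> (\<Sum>k<n. Mx k + \<delta> * x) / real n"
        using n step by (intro divide_right_mono sum_mono) auto
      also have "\<dots> = (\<Sum>k<n. B (real (\<tau> k) / real n) \<omega>) / real n + \<delta> * x"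
        using n \<tau>val by (simp add: sum.distrib add_divide_distrib)
      also have "(\<Sum>k<n. B (real (\<tau> k) / real n) \<omega>) / real n = (\<Sum>i<n. coef n \<tau> i * xi n i \<omega>)"
        by (rule swap_sum[OF \<omega> \<tau>le])
      finally have "(1 - \<delta>) * x < (\<Sum>i<n. coef n \<tau> i * xi n i \<omega>)" using Ax by (simp add: algebra_simps)
      then have "\<omega> \<in> G \<tau>" unfolding G_def using \<omega> by auto
      then show ?thesis using \<tau>T by blast
    qed
  qed
  have "measure M {\<omega>\<in>space M. max_area B \<omega> > x} \<le> measure M ((\<Union>\<tau>\<in>T. G \<tau>) \<union> (\<Union>i<n. Q i))"
    by (rule finite_measure_mono[OF sub]) (intro sets.Un sets.finite_UN finT Gsets Osets; simp)
  also have "\<dots> \<le> measure M (\<Union>\<tau>\<in>T. G \<tau>) + measure M (\<Union>i<n. Q i)"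
    by (rule measure_Un_le) (use finT Gsets Osets in auto)
  also have "measure M (\<Union>\<tau>\<in>T. G \<tau>) \<le> (\<Sum>\<tau>\<in>T. measure M (G \<tau>))"
    by (rule measure_UNION_le) (use finT Gsets in auto)
  also have "\<dots> \<le> (\<Sum>\<tau>\<in>T. exp (- ((1 - \<delta>) * x)\<^sup>2 / (2 * (1/3))))"
  proof (rule sum_mono)
    fix \<tau> assume "\<tau> \<in> T"
    then have le: "\<And>k. k < n \<Longrightarrow> \<tau> k \<le> k" using Tdom by blast
    show "measure M (G \<tau>) \<le> exp (- ((1 - \<delta>) * x)\<^sup>2 / (2 * (1/3)))"
      unfolding G_def by (rule lin_upper[OF n _ _ coef_var_upper[OF n le]]) (use \<delta> x in auto)
  qed
  also have "measure M (\<Union>i<n. Q i) \<le> (\<Sum>i<n. measure M (Q i))"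
    by (rule measure_UNION_le) (use Osets in auto)
  also have "\<dots> \<le> (\<Sum>i<n. 4 * exp (- ((\<delta> * x)\<^sup>2 / (128 * (1 / real n)))))"
    by (rule sum_mono) (rule Obound)
  finally show ?thesis unfolding T_def by simp
qed

lemma lower_fixed:
  assumes n: "2 \<le> n" and x: "0 \<le> x"
  shows "normal_density 0 (sqrt ((\<Sum>m<n. real m ^ 2) / real n ^ 3)) (x + 1) \<le> measure M {\<omega>\<in>space M. max_area B \<omega> > x}"
proof -
  have n0: "0 < n" using n by simp
  have nz: "\<exists>i<n. coef n id i \<noteq> 0"
  proof (intro exI[of _ 0] conjI)
    show "0 < n" by fact
    have "card {k \<in> {..<n}. 0 < k} = n - 1" using card_gt[of n 0] by simp
    then show "coef n id 0 \<noteq> 0" unfolding coef_def using n by simp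
  qed
  have "normal_density 0 (sqrt ((\<Sum>m<n. real m ^ 2) / real n ^ 3)) (x + 1) \<le> measure M {\<omega>\<in>space M. x < (\<Sum>i<n. coef n id i * xi n i \<omega>)}"
    using lin_lower[OF n0 x nz] unfolding coef_var_id[OF n0] .
  also have "\<dots> \<le> measure M {\<omega>\<in>space M. max_area B \<omega> > x}"
  proof (rule finite_measure_mono)
    show "{\<omega>\<in>space M. max_area B \<omega> > x} \<in> sets M"
      using A_meas unfolding borel_measurable_iff_greater by blast
    show "{\<omega>\<in>space M. x < (\<Sum>i<n. coef n id i * xi n i \<omega>)} \<subseteq> {\<omega>\<in>space M. max_area B \<omega> > x}"
    proof safe
      fix \<omega> assume \<omega>: "\<omega> \<in> space M" and lt: "x < (\<Sum>i<n. coef n id i * xi n i \<omega>)"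
      have "(\<Sum>i<n. coef n id i * xi n i \<omega>) = (\<Sum>k<n. B (real (id k) / real n) \<omega>) / real n"
        by (rule swap_sum[OF \<omega>, symmetric]) simp
      also have "\<dots> \<le> (\<Sum>k<n. running_max B (real k / real n) \<omega>) / real n"
        using n0 by (intro divide_right_mono sum_mono S_ge[OF \<omega>]) auto
      also have "\<dots> \<le> max_area B \<omega>" by (rule A_bounds(1)[OF \<omega> n0])
      finally show "max_area B \<omega> > x" using lt by simp
    qed
  qed
  finally show ?thesis .
qed

end


lemma aux_quad: "(P::real) \<le> (3/2 + e/2)*X + Y + (3+e)/2 \<Longrightarrow> Y + ((3+e)/2 - C) \<le> e/2*X \<Longrightarrow> -(3/2+e)*X \<le> C - P"
  by (simp add: field_simps)

context bm
begin

lemma lower_asym: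
  assumes e: "0 < \<epsilon>"
  shows "eventually (\<lambda>x. exp (- (3/2 + \<epsilon>) * x\<^sup>2) \<le> measure M {\<omega>\<in>space M. max_area B \<omega> > x}) at_top"
proof -
  obtain n :: nat where nbig: "3 * (3 + \<epsilon>) / (2 * \<epsilon>) + 2 < real n" using reals_Archimedean2 by blast
  have "0 \<le> 3 * (3 + \<epsilon>) / (2 * \<epsilon>)" using e by simp
  then have "2 < real n" using nbig by linarith
  then have n2: "2 \<le> n" by simp
  have n0: "0 < real n" using n2 by simp
  define v where "v = (\<Sum>m<n. real m ^ 2) / real n ^ 3"
  have vlow: "1/3 - 1 / (2 * real n) \<le> v"
  proof -
    have "(real n ^ 3 / 3 - real n ^ 2 / 2) / real n ^ 3 \<le> v"
      unfolding v_def using n0 by (intro divide_right_mono sum_sq_lower) auto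
    moreover have "(real n ^ 3 / 3 - real n ^ 2 / 2) / real n ^ 3 = 1/3 - 1 / (2 * real n)"
      using n0 by (simp add: field_simps power3_eq_cube power2_eq_square)
    ultimately show ?thesis by simp
  qed
  have small: "1 / (2 * real n) < \<epsilon> / (3 * (3 + \<epsilon>))"
  proof -
    have "3 * (3 + \<epsilon>) / (2 * \<epsilon>) < real n" using nbig by simp
    then have "3 * (3 + \<epsilon>) < real n * (2 * \<epsilon>)" using e by (simp add: pos_divide_less_eq)
    then show ?thesis using e n0 by (simp add: field_simps)
  qed
  have "1 / (3 + \<epsilon>) = 1/3 - \<epsilon> / (3 * (3 + \<epsilon>))" using e by (simp add: field_simps)
  then have vgt: "1 / (3 + \<epsilon>) < v" using vlow small by linarith
  have "0 < 1 / (3 + \<epsilon>)" using e by simp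
  then have v0: "0 < v" using vgt by linarith
  define a where "a = 1 / (2 * v)"
  have a_le: "a \<le> (3 + \<epsilon>) / 2"
  proof -
    have "1 < v * (3 + \<epsilon>)" using vgt e by (simp add: field_simps)
    then show ?thesis unfolding a_def using v0 e by (simp add: field_simps)
  qed
  have a0: "0 \<le> a" unfolding a_def using v0 by simp
  define C where "C = ln (1 / sqrt (2 * pi * v))"
  have dens: "normal_density 0 (sqrt v) (x + 1) = exp (C - a * (x + 1)\<^sup>2)" for x
  proof -
    have h1: "1 / sqrt (2 * pi * v) = exp C" unfolding C_def using v0 by simp
    have h2: "C - a * (x + 1)\<^sup>2 = C + - (x + 1)\<^sup>2 / (2 * v)" unfolding a_def by simp
    have "normal_density 0 (sqrt v) (x + 1) = 1 / sqrt (2 * pi * v) * exp (- (x + 1)\<^sup>2 / (2 * v))"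
      unfolding normal_density_def using v0 by simp
    also have "\<dots> = exp C * exp (- (x + 1)\<^sup>2 / (2 * v))" unfolding h1 ..
    also have "\<dots> = exp (C + - (x + 1)\<^sup>2 / (2 * v))" by (rule exp_add[symmetric])
    also have "\<dots> = exp (C - a * (x + 1)\<^sup>2)" unfolding h2 ..
    finally show ?thesis .
  qed
  have ev: "eventually (\<lambda>x. (3 + \<epsilon>) * x + ((3 + \<epsilon>) / 2 - C) \<le> \<epsilon> / 2 * x\<^sup>2) at_top"
    by (rule eventually_quadratic) (use e in simp)
  show ?thesis
    using ev eventually_ge_at_top[of "0::real"]
  proof eventually_elim
    case (elim x)
    have "a * (x + 1)\<^sup>2 \<le> (3 + \<epsilon>) / 2 * (x + 1)\<^sup>2" using a_le by (intro mult_right_mono) auto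
    also have "\<dots> = (3/2 + \<epsilon>/2) * x\<^sup>2 + (3 + \<epsilon>) * x + (3 + \<epsilon>) / 2" by (simp add: power2_eq_square algebra_simps)
    finally have "- (3/2 + \<epsilon>) * x\<^sup>2 \<le> C - a * (x + 1)\<^sup>2" by (rule aux_quad[OF _ elim(1)])
    then have "exp (- (3/2 + \<epsilon>) * x\<^sup>2) \<le> normal_density 0 (sqrt v) (x + 1)" unfolding dens by simp
    also have "\<dots> \<le> measure M {\<omega>\<in>space M. max_area B \<omega> > x}"
      using lower_fixed[OF n2 elim(2)] unfolding v_def .
    finally show ?case .
  qed
qed

lemma upper_asym:
  assumes e: "0 < \<epsilon>"
  shows "eventually (\<lambda>x. measure M {\<omega>\<in>space M. max_area B \<omega> > x} \<le> exp (- (3/2 - \<epsilon>) * x\<^sup>2)) at_top"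
proof -
  define \<delta> where "\<delta> = min (1/2) (\<epsilon> / 6)"
  have d0: "0 < \<delta>" "\<delta> < 1" "\<delta> \<le> \<epsilon> / 6" using e unfolding \<delta>_def by auto
  obtain n :: nat where nbig: "192 / \<delta>\<^sup>2 < real n" using reals_Archimedean2 by blast
  have "0 < 192 / \<delta>\<^sup>2" using d0 by simp
  then have "0 < real n" using nbig by linarith
  then have n0: "0 < n" by simp
  have nrate: "3/2 < \<delta>\<^sup>2 * real n / 128"
  proof -
    have "192 < real n * \<delta>\<^sup>2" using nbig d0 by (simp add: pos_divide_less_eq)
    then show ?thesis by (simp add: field_simps)
  qed
  define C1 where "C1 = real (card (Pi\<^sub>E {..<n} (\<lambda>k. {..k::nat}))) + real n * 4"
  have C1: "0 < C1" unfolding C1_def using n0 by (simp add: add_nonneg_pos)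
  have evK: "eventually (\<lambda>x. 0 * x + 2 * ln 4 \<le> \<delta>\<^sup>2 * real n / 128 * x\<^sup>2) at_top"
    by (rule eventually_quadratic) (use d0 n0 in simp)
  have evC: "eventually (\<lambda>x. 0 * x + ln C1 \<le> \<epsilon> / 2 * x\<^sup>2) at_top"
    by (rule eventually_quadratic) (use e in simp)
  show ?thesis
    using evK evC eventually_gt_at_top[of "0::real"]
  proof eventually_elim
    case (elim x)
    have resc: "(\<delta> * x)\<^sup>2 / (128 * (1 / real n)) = \<delta>\<^sup>2 * real n / 128 * x\<^sup>2"
      using n0 by (simp add: field_simps power_mult_distrib)
    have K: "2 * ln 4 \<le> (\<delta> * x)\<^sup>2 / (128 * (1 / real n))" using elim(1) unfolding resc by simp
    let ?E = "exp (- (3/2 - \<epsilon>/2) * x\<^sup>2)"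
    have e1: "exp (- ((1 - \<delta>) * x)\<^sup>2 / (2 * (1/3))) \<le> ?E"
    proof -
      have "(1 - \<delta>)\<^sup>2 \<ge> 1 - 2 * \<delta>" by (simp add: power2_eq_square algebra_simps)
      then have "3/2 * (1 - \<delta>)\<^sup>2 \<ge> 3/2 - \<epsilon>/2" using d0 by linarith
      then have "(3/2 - \<epsilon>/2) * x\<^sup>2 \<le> 3/2 * (1 - \<delta>)\<^sup>2 * x\<^sup>2" by (intro mult_right_mono) auto
      then have fact: "(3/2 - \<epsilon>/2) * x\<^sup>2 \<le> 3/2 * (1 - \<delta>)\<^sup>2 * x\<^sup>2" .
      have "exp (- ((1 - \<delta>) * x)\<^sup>2 / (2 * (1/3))) = exp (- (3/2 * (1 - \<delta>)\<^sup>2 * x\<^sup>2))"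
        by (simp add: power_mult_distrib)
      also have "\<dots> \<le> ?E" using fact by (simp only: exp_le_cancel_iff mult_minus_left neg_le_iff_le)
      finally show ?thesis .
    qed
    have e2: "exp (- ((\<delta> * x)\<^sup>2 / (128 * (1 / real n)))) \<le> ?E"
    proof -
      have "3/2 - \<epsilon>/2 \<le> \<delta>\<^sup>2 * real n / 128" using nrate e by linarith
      then have "(3/2 - \<epsilon>/2) * x\<^sup>2 \<le> \<delta>\<^sup>2 * real n / 128 * x\<^sup>2" by (intro mult_right_mono) auto
      then show ?thesis unfolding resc by (simp only: exp_le_cancel_iff mult_minus_left neg_le_iff_le)
    qed
    have "measure M {\<omega>\<in>space M. max_area B \<omega> > x} \<le>
       real (card (Pi\<^sub>E {..<n} (\<lambda>k. {..k}))) * exp (- ((1 - \<delta>) * x)\<^sup>2 / (2 * (1/3)))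
       + real n * (4 * exp (- ((\<delta> * x)\<^sup>2 / (128 * (1 / real n)))))"
      by (rule upper_fixed[OF n0 d0(1,2) elim(3) K])
    also have "\<dots> \<le> real (card (Pi\<^sub>E {..<n} (\<lambda>k. {..k::nat}))) * ?E + real n * (4 * ?E)"
      by (intro add_mono mult_left_mono e1 e2) auto
    also have "\<dots> = C1 * ?E" unfolding C1_def by (simp add: algebra_simps)
    also have "\<dots> = exp (ln C1 + - (3/2 - \<epsilon>/2) * x\<^sup>2)" using C1 by (simp only: exp_add exp_ln)
    also have "\<dots> \<le> exp (- (3/2 - \<epsilon>) * x\<^sup>2)" using elim(2) by (simp add: algebra_simps)
    finally show ?case .
  qed
qed

end

theorem corollary2:
  fixes M :: "'a measure" and B :: "real \<Rightarrow> 'a \<Rightarrow> real"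
  assumes "std_brownian_motion M B"
  shows "\<exists>g :: real \<Rightarrow> real. g \<in> o[at_top](\<lambda>x. x ^ 2) \<and>
           (\<forall>\<^sub>F x in at_top.
              measure M {\<omega> \<in> space M. max_area B \<omega> > x} = exp (- 3 * x ^ 2 / 2 + g x))"
proof -
  interpret bm M B by unfold_locales (rule assms)
  define p where "p x = measure M {\<omega> \<in> space M. max_area B \<omega> > x}" for x
  define g where "g x = ln (p x) + 3 * x ^ 2 / 2" for x
  have ppos: "eventually (\<lambda>x. 0 < p x) at_top"
    using lower_asym[OF zero_less_one] by eventually_elim (auto simp: p_def intro: less_le_trans[OF exp_gt_zero])
  have "g \<in> o[at_top](\<lambda>x. x ^ 2)"
  proof (rule landau_o.smallI)
    fix c :: real assume c: "0 < c"
    show "eventually (\<lambda>x. norm (g x) \<le> c * norm (x ^ 2)) at_top"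
      using lower_asym[OF c] upper_asym[OF c] ppos
    proof eventually_elim
      case (elim x)
      have l1: "- (3/2 + c) * x\<^sup>2 \<le> ln (p x)"
      proof -
        have "ln (exp (- (3/2 + c) * x\<^sup>2)) \<le> ln (p x)"
          using elim(1,3) unfolding p_def by (subst ln_le_cancel_iff) auto
        then show ?thesis by simp
      qed
      have l2: "ln (p x) \<le> - (3/2 - c) * x\<^sup>2"
      proof -
        have "ln (p x) \<le> ln (exp (- (3/2 - c) * x\<^sup>2))"
          using elim(2,3) unfolding p_def by (subst ln_le_cancel_iff) auto
        then show ?thesis by simp
      qed
      have "\<bar>g x\<bar> \<le> c * x\<^sup>2" unfolding g_def using l1 l2 by (simp add: algebra_simps abs_le_iff)
      then show ?case by simp
    qed
  qed
  moreover have "eventually (\<lambda>x. p x = exp (- 3 * x ^ 2 / 2 + g x)) at_top"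
    using ppos by eventually_elim (simp add: g_def)
  ultimately show ?thesis unfolding p_def by blast
qed


end
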